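(* Let $v\ge2$ and $M,N\in{\cal I}_v$ with $M\perp N$ with respect to the scalar product $(x,y):=\mathrm{Re}(xy^* )$. Then $$[e^M,e^N]=2\,\frac{\sin|M|}{|M|}\,\frac{\sin|N|}{|N|}\,MN .$$
   Context: ${\cal A}_v$ is the real Cayley-Dickson algebra of dimension $2^v$, $z^*$ its conjugation, $\mathrm{Re}(z)=(z+z^* )/2$, $|z|=(zz^* )^{1/2}$, ${\cal I}_v=\{z:\mathrm{Re}(z)=0\}$. For $M\in{\cal I}_v$, $e^M=\cos|M|+\frac{\sin|M|}{|M|}M$ (with $\frac{\sin|M|}{|M|}:=1$ when $M=0$). $[a,b]:=ab-ba$. *)

theory Defs
  imports Complex_Main
begin

text \<open>Elements of the real Cayley-Dickson algebra A_v of dimension 2^v are represented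
as coefficient functions nat => real vanishing at indices >= 2^v.
An element of A_(v+1) is the pair (a,b) of its lower half a (indices < 2^v) and its
upper half b (indices 2^v .. 2^(v+1)-1), with the doubling rules
  (a,b)* = (a*, -b),   (a,b)(c,d) = (ac - d* b, d a + b c*).\<close>

type_synonym cd = "nat \<Rightarrow> real"

definition CD :: "nat \<Rightarrow> cd set" where
  "CD v = {x. \<forall>i\<ge>2^v. x i = 0}"

definition cd_lo :: "nat \<Rightarrow> cd \<Rightarrow> cd" where
  "cd_lo v x = (\<lambda>i. if i < 2^v then x i else 0)"

definition cd_hi :: "nat \<Rightarrow> cd \<Rightarrow> cd" where
  "cd_hi v x = (\<lambda>i. if i < 2^v then x (i + 2^v) else 0)"

definition cd_join :: "nat \<Rightarrow> cd \<Rightarrow> cd \<Rightarrow> cd" where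
  "cd_join v a b = (\<lambda>i. if i < 2^v then a i else if i < 2^Suc v then b (i - 2^v) else 0)"

definition cd_add :: "cd \<Rightarrow> cd \<Rightarrow> cd" where
  "cd_add x y = (\<lambda>i. x i + y i)"

definition cd_sub :: "cd \<Rightarrow> cd \<Rightarrow> cd" where
  "cd_sub x y = (\<lambda>i. x i - y i)"

definition cd_scale :: "real \<Rightarrow> cd \<Rightarrow> cd" where
  "cd_scale r x = (\<lambda>i. r * x i)"

definition cd_one :: cd where
  "cd_one = (\<lambda>i. if i = 0 then 1 else 0)"

fun cd_conj :: "nat \<Rightarrow> cd \<Rightarrow> cd" where
  "cd_conj 0 x = (\<lambda>i. if i = 0 then x 0 else 0)"
| "cd_conj (Suc v) x = cd_join v (cd_conj v (cd_lo v x)) (\<lambda>i. - cd_hi v x i)"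

fun cd_mult :: "nat \<Rightarrow> cd \<Rightarrow> cd \<Rightarrow> cd" where
  "cd_mult 0 x y = (\<lambda>i. if i = 0 then x 0 * y 0 else 0)"
| "cd_mult (Suc v) x y =
     (let a = cd_lo v x; b = cd_hi v x; c = cd_lo v y; d = cd_hi v y in
      cd_join v (cd_sub (cd_mult v a c) (cd_mult v (cd_conj v d) b))
                (cd_add (cd_mult v d a) (cd_mult v b (cd_conj v c))))"

definition cd_Re :: "nat \<Rightarrow> cd \<Rightarrow> cd" where
  "cd_Re v z = cd_scale (1/2) (cd_add z (cd_conj v z))"

text \<open>|z| = (z z*)^(1/2); z z* is a real multiple of the unit, its real coefficient is index 0.\<close>
definition cd_norm :: "nat \<Rightarrow> cd \<Rightarrow> real" where
  "cd_norm v z = sqrt (cd_mult v z (cd_conj v z) 0)"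

definition cd_Im :: "nat \<Rightarrow> cd set" where
  "cd_Im v = {z \<in> CD v. cd_Re v z = (\<lambda>i. 0)}"

definition cd_inner :: "nat \<Rightarrow> cd \<Rightarrow> cd \<Rightarrow> cd" where
  "cd_inner v x y = cd_Re v (cd_mult v x (cd_conj v y))"

definition sinc :: "real \<Rightarrow> real" where
  "sinc r = (if r = 0 then 1 else sin r / r)"

definition cd_exp :: "nat \<Rightarrow> cd \<Rightarrow> cd" where
  "cd_exp v M = cd_add (cd_scale (cos (cd_norm v M)) cd_one)
                       (cd_scale (sinc (cd_norm v M)) M)"

definition cd_comm :: "nat \<Rightarrow> cd \<Rightarrow> cd \<Rightarrow> cd" where
  "cd_comm v a b = cd_sub (cd_mult v a b) (cd_mult v b a)"

end

theory Submission
  imports Defs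
begin

lemma lo_CD: "cd_lo v x \<in> CD v" and hi_CD: "cd_hi v x \<in> CD v"
  by (auto simp: CD_def cd_lo_def cd_hi_def)

lemma join_CD: "cd_join v a b \<in> CD (Suc v)"
  by (auto simp: CD_def cd_join_def)

lemma conj_CD: "cd_conj v x \<in> CD v"
  by (cases v) (auto simp: CD_def cd_join_def)

lemma mult_CD: "cd_mult v x y \<in> CD v"
  by (cases v) (auto simp: CD_def Let_def cd_join_def)

lemma add_CD: "x \<in> CD v \<Longrightarrow> y \<in> CD v \<Longrightarrow> cd_add x y \<in> CD v"
  and sub_CD: "x \<in> CD v \<Longrightarrow> y \<in> CD v \<Longrightarrow> cd_sub x y \<in> CD v"
  and scale_CD: "x \<in> CD v \<Longrightarrow> cd_scale r x \<in> CD v"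
  by (auto simp: CD_def cd_add_def cd_sub_def cd_scale_def)

lemma lo_join: "a \<in> CD v \<Longrightarrow> cd_lo v (cd_join v a b) = a"
  by (auto simp: CD_def cd_lo_def cd_join_def fun_eq_iff)

lemma hi_join: "b \<in> CD v \<Longrightarrow> cd_hi v (cd_join v a b) = b"
  by (auto simp: CD_def cd_hi_def cd_join_def fun_eq_iff)

lemma neg_scale: "(\<lambda>i. - f i) = cd_scale (-1) f"
  by (simp add: cd_scale_def fun_eq_iff)

lemma lo_add: "cd_lo v (cd_add x y) = cd_add (cd_lo v x) (cd_lo v y)"
  and hi_add: "cd_hi v (cd_add x y) = cd_add (cd_hi v x) (cd_hi v y)"
  and lo_scale: "cd_lo v (cd_scale r x) = cd_scale r (cd_lo v x)"
  and hi_scale: "cd_hi v (cd_scale r x) = cd_scale r (cd_hi v x)"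
  by (auto simp: cd_lo_def cd_hi_def cd_add_def cd_scale_def fun_eq_iff)

lemma conj_lin: "cd_conj v (cd_add x y) = cd_add (cd_conj v x) (cd_conj v y) \<and>
   cd_conj v (cd_scale r x) = cd_scale r (cd_conj v x)"
proof (induction v arbitrary: x y)
  case 0
  then show ?case by (auto simp: cd_add_def cd_scale_def fun_eq_iff)
next
  case (Suc v)
  show ?case
    by (simp add: lo_add hi_add lo_scale hi_scale Suc)
       (auto simp: cd_add_def cd_scale_def cd_join_def fun_eq_iff)
qed

lemma conj_add: "cd_conj v (cd_add x y) = cd_add (cd_conj v x) (cd_conj v y)"
  and conj_scale: "cd_conj v (cd_scale r x) = cd_scale r (cd_conj v x)"
  using conj_lin by auto

lemma conj_sub: "cd_conj v (cd_sub x y) = cd_sub (cd_conj v x) (cd_conj v y)"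
proof -
  have "cd_sub x y = cd_add x (cd_scale (-1) y)" by (simp add: cd_sub_def cd_add_def cd_scale_def fun_eq_iff)
  moreover have "cd_sub (cd_conj v x) (cd_conj v y) = cd_add (cd_conj v x) (cd_scale (-1) (cd_conj v y))"
    by (simp add: cd_sub_def cd_add_def cd_scale_def fun_eq_iff)
  ultimately show ?thesis by (simp add: conj_add conj_scale)
qed

lemma mult_lin: "cd_mult v (cd_add x y) z = cd_add (cd_mult v x z) (cd_mult v y z) \<and>
   cd_mult v z (cd_add x y) = cd_add (cd_mult v z x) (cd_mult v z y) \<and>
   cd_mult v (cd_scale r x) z = cd_scale r (cd_mult v x z) \<and>
   cd_mult v z (cd_scale r x) = cd_scale r (cd_mult v z x)"
proof (induction v arbitrary: x y z r)
  case 0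
  then show ?case by (auto simp: cd_add_def cd_scale_def fun_eq_iff algebra_simps)
next
  case (Suc v)
  show ?case
    by (simp add: Let_def lo_add hi_add lo_scale hi_scale conj_add conj_scale Suc)
       (auto simp: cd_add_def cd_sub_def cd_scale_def cd_join_def fun_eq_iff algebra_simps)
qed

lemma mult_add_left: "cd_mult v (cd_add x y) z = cd_add (cd_mult v x z) (cd_mult v y z)"
  and mult_add_right: "cd_mult v z (cd_add x y) = cd_add (cd_mult v z x) (cd_mult v z y)"
  and mult_scale_left: "cd_mult v (cd_scale r x) z = cd_scale r (cd_mult v x z)"
  and mult_scale_right: "cd_mult v z (cd_scale r x) = cd_scale r (cd_mult v z x)"
  using mult_lin by auto

lemma conj_conj: "x \<in> CD v \<Longrightarrow> cd_conj v (cd_conj v x) = x"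
proof (induction v arbitrary: x)
  case 0
  then show ?case by (auto simp: CD_def fun_eq_iff)
next
  case (Suc v)
  have j: "cd_join v (cd_lo v x) (cd_hi v x) = x"
    using Suc.prems by (auto simp: CD_def cd_join_def cd_lo_def cd_hi_def fun_eq_iff)
  have "cd_conj (Suc v) (cd_conj (Suc v) x) = cd_join v (cd_lo v x) (cd_hi v x)"
    by (simp add: lo_join hi_join conj_CD neg_scale scale_CD hi_CD Suc.IH lo_CD)
       (simp add: cd_scale_def)
  then show ?case using j by simp
qed

lemma conj_mult: "cd_conj v (cd_mult v x y) = cd_mult v (cd_conj v y) (cd_conj v x)"
proof (induction v arbitrary: x y)
  case 0
  then show ?case by (auto simp: fun_eq_iff)
next
  case (Suc v)
  show ?case
    by (simp add: Let_def lo_join hi_join conj_CD neg_scale scale_CD hi_CD lo_CD mult_CD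
        sub_CD add_CD conj_scale conj_sub conj_add mult_scale_left mult_scale_right Suc.IH conj_conj)
       (auto simp: cd_add_def cd_sub_def cd_scale_def cd_join_def fun_eq_iff algebra_simps
          conj_add[unfolded cd_add_def] conj_scale[unfolded cd_scale_def])
qed

lemma mult_zero: "cd_mult v x (\<lambda>i. 0) = (\<lambda>i. 0)" "cd_mult v (\<lambda>i. 0) x = (\<lambda>i. 0)"
proof -
  have z: "(\<lambda>i. 0::real) = cd_scale 0 (\<lambda>i. 0)" by (simp add: cd_scale_def)
  show "cd_mult v x (\<lambda>i. 0) = (\<lambda>i. 0)" "cd_mult v (\<lambda>i. 0) x = (\<lambda>i. 0)"
    by (subst z, subst z, simp add: mult_scale_left mult_scale_right, simp add: cd_scale_def)+
qed

lemma conj_zero: "cd_conj v (\<lambda>i. 0) = (\<lambda>i. 0)"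
proof -
  have z: "(\<lambda>i. 0::real) = cd_scale 0 (\<lambda>i. 0)" by (simp add: cd_scale_def)
  show ?thesis by (subst z, subst z, simp add: conj_scale, simp add: cd_scale_def)
qed

lemma one_CD: "cd_one \<in> CD v"
  by (auto simp: CD_def cd_one_def)

lemma lo_one: "cd_lo v cd_one = cd_one" and hi_one: "cd_hi v cd_one = (\<lambda>i. 0)"
  by (auto simp: cd_lo_def cd_hi_def cd_one_def fun_eq_iff)

lemma conj_one: "cd_conj v cd_one = cd_one"
proof (induction v)
  case 0
  then show ?case by (auto simp: cd_one_def fun_eq_iff)
next
  case (Suc v)
  then show ?case by (simp add: lo_one hi_one) (auto simp: cd_join_def cd_one_def fun_eq_iff)
qed

lemma mult_one: "x \<in> CD v \<Longrightarrow> cd_mult v cd_one x = x \<and> cd_mult v x cd_one = x"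
proof (induction v arbitrary: x)
  case 0
  then show ?case by (auto simp: cd_one_def fun_eq_iff CD_def)
next
  case (Suc v)
  have j: "cd_join v (cd_lo v x) (cd_hi v x) = x"
    using Suc.prems by (auto simp: CD_def cd_join_def cd_lo_def cd_hi_def fun_eq_iff)
  have "cd_mult (Suc v) cd_one x = cd_join v (cd_lo v x) (cd_hi v x)"
       "cd_mult (Suc v) x cd_one = cd_join v (cd_lo v x) (cd_hi v x)"
    by (simp_all add: Let_def lo_one hi_one mult_zero conj_zero conj_one Suc.IH lo_CD hi_CD)
       (auto simp: cd_sub_def cd_add_def)
  then show ?case using j by simp
qed

theorem lemma11:
  fixes v :: nat and M N :: cd
  assumes "v \<ge> 2"
    and "M \<in> cd_Im v" and "N \<in> cd_Im v"
    and "cd_inner v M N = (\<lambda>i. 0)"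
  shows "cd_comm v (cd_exp v M) (cd_exp v N) =
         cd_scale (2 * sinc (cd_norm v M) * sinc (cd_norm v N)) (cd_mult v M N)"
proof -
  have MC: "M \<in> CD v" and NC: "N \<in> CD v" using assms(2,3) by (auto simp: cd_Im_def)
  have cM: "cd_conj v M = cd_scale (-1) M"
  proof -
    have "cd_Re v M = (\<lambda>i. 0)" using assms(2) by (auto simp: cd_Im_def)
    then show ?thesis unfolding cd_Re_def cd_scale_def cd_add_def fun_eq_iff
      by simp (metis add_eq_0_iff)
  qed
  have cN: "cd_conj v N = cd_scale (-1) N"
  proof -
    have "cd_Re v N = (\<lambda>i. 0)" using assms(3) by (auto simp: cd_Im_def)
    then show ?thesis unfolding cd_Re_def cd_scale_def cd_add_def fun_eq_iff
      by simp (metis add_eq_0_iff)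
  qed
  have e1: "cd_mult v M (cd_conj v N) = cd_scale (-1) (cd_mult v M N)"
    by (simp add: cN mult_scale_right)
  have e2: "cd_conj v (cd_mult v M (cd_conj v N)) = cd_scale (-1) (cd_mult v N M)"
    by (simp add: conj_mult conj_conj NC cM mult_scale_right)
  have anti: "cd_mult v N M = cd_scale (-1) (cd_mult v M N)"
    using assms(4) unfolding cd_inner_def cd_Re_def e2
    by (simp add: e1) (auto simp: cd_scale_def cd_add_def fun_eq_iff)
  have o1: "cd_mult v cd_one cd_one = cd_one" using mult_one one_CD by blast
  have o2: "cd_mult v cd_one N = N" "cd_mult v N cd_one = N"
     "cd_mult v cd_one M = M" "cd_mult v M cd_one = M"
    using mult_one MC NC by blast+
  show ?thesis
    unfolding cd_comm_def cd_exp_def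
    by (simp add: mult_add_left mult_add_right mult_scale_left mult_scale_right o1 o2 anti)
       (auto simp: cd_scale_def cd_add_def cd_sub_def fun_eq_iff algebra_simps)
qed

end
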